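(* Let $c\ge 1$ be an integer. The $c$-indistinguishable finite bias distributions are in one-to-one correspondence with the symmetric quadrature systems of degree $c-1$, via the following mutually inverse maps. (i) For a symmetric quadrature system $\mathcal{Q}=(X,\omega)$ of degree $c-1$, let $\mathcal{P}(\mathcal{Q})$ be the distribution that takes the value $\frac{1+\xi}{2}$ with probability $\frac{\omega(\xi)}{C\sqrt{1-\xi^2}}$ for each $\xi\in X$, where $C=\sum_{\xi\in X}\omega(\xi)/\sqrt{1-\xi^2}$. (ii) For a $c$-indistinguishable finite bias distribution $\mathcal{P}$ taking the values $p_1,\dots,p_k$ with probabilities $q_1,\dots,q_k$ respectively, let $\mathcal{Q}(\mathcal{P})=(\{\xi_1,\dots,\xi_k\},\omega)$ with $\xi_i=2p_i-1$ and $\omega(\xi_i)=\sqrt{p_i(1-p_i)}\,q_i/C'$, where $C'=\sum_{i=1}^k\sqrt{p_i(1-p_i)}\,q_i/2$. Then $\mathcal{P}(\mathcal{Q})$ is a $c$-indistinguishable finite bias distribution, $\mathcal{Q}(\mathcal{P})$ is a symmetric quadrature system of degree $c-1$, $\mathcal{Q}(\mathcal{P}(\mathcal{Q}))=\mathcal{Q}$ and $\mathcal{P}(\mathcal{Q}(\mathcal{P}))=\mathcal{P}$.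
   Context: A finite bias distribution is a probability distribution $\mathcal{P}$ supported on a finite subset of the open interval $(0,1)$ that is symmetric: for every $a$, $\mathcal{P}$ outputs $a$ and $1-a$ with the same probability. $E_p$ denotes expectation over $p$ drawn from $\mathcal{P}$. For $0<p<1$ put $\sigma(p)=\sqrt{(1-p)/p}$, and for integers $\ell\ge 1$, $0\le x\le\ell$ put $f_{\ell,x}(p)=p^x(1-p)^{\ell-x}\bigl(x\sigma(p)-(\ell-x)\sigma(1-p)\bigr)$ and $R_{\ell,x}=\max\{0,E_p[f_{\ell,x}(p)]\}$. For a positive integer $c$, $\mathcal{P}$ is called $c$-indistinguishable if $\sum_{x=1}^{\ell-1}\binom{\ell}{x}R_{\ell,x}=0$ for all $2\le\ell\le c$. A quadrature system (QS) of degree $d$ is a pair $(X,\omega)$ where $X$ is a finite subset of $(-1,1)$ and $\omega:X\to(0,\infty)$, such that $\int_{-1}^1F(t)\,dt=\sum_{\xi\in X}\omega(\xi)F(\xi)$ for every real polynomial $F$ of degree at most $d$. Its order is $|X|$. It is symmetric if $-X=X$ and $\omega(-\xi)=\omega(\xi)$ for all $\xi\in X$. *)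

theory Defs
  imports "HOL-Analysis.Analysis" "HOL-Probability.Probability_Mass_Function"
    "HOL-Computational_Algebra.Polynomial"
begin

definition finite_bias_dist :: "real pmf \<Rightarrow> bool" where
  "finite_bias_dist P \<longleftrightarrow> finite (set_pmf P) \<and> set_pmf P \<subseteq> {0<..<1} \<and>
     (\<forall>a. pmf P a = pmf P (1 - a))"

definition sigma :: "real \<Rightarrow> real" where
  "sigma p = sqrt ((1 - p) / p)"

definition f_bias :: "nat \<Rightarrow> nat \<Rightarrow> real \<Rightarrow> real" where
  "f_bias l x p = p ^ x * (1 - p) ^ (l - x) *
      (real x * sigma p - real (l - x) * sigma (1 - p))"

definition R_bias :: "real pmf \<Rightarrow> nat \<Rightarrow> nat \<Rightarrow> real" where
  "R_bias P l x = max 0 (measure_pmf.expectation P (f_bias l x))"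

definition c_indist :: "nat \<Rightarrow> real pmf \<Rightarrow> bool" where
  "c_indist c P \<longleftrightarrow> (\<forall>l. 2 \<le> l \<and> l \<le> c \<longrightarrow>
      (\<Sum>x = 1..l - 1. real (l choose x) * R_bias P l x) = 0)"

text \<open>Quadrature systems: a node set X and a weight function \<omega> (only its values on X matter).\<close>

definition quad_system :: "nat \<Rightarrow> real set \<Rightarrow> (real \<Rightarrow> real) \<Rightarrow> bool" where
  "quad_system d X \<omega> \<longleftrightarrow> finite X \<and> X \<subseteq> {-1<..<1} \<and> (\<forall>\<xi>\<in>X. \<omega> \<xi> > 0) \<and>
     (\<forall>F :: real poly. degree F \<le> d \<longrightarrow>
        integral {-1..1} (poly F) = (\<Sum>\<xi>\<in>X. \<omega> \<xi> * poly F \<xi>))"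

definition symmetric_qs :: "real set \<Rightarrow> (real \<Rightarrow> real) \<Rightarrow> bool" where
  "symmetric_qs X \<omega> \<longleftrightarrow> uminus ` X = X \<and> (\<forall>\<xi>\<in>X. \<omega> (- \<xi>) = \<omega> \<xi>)"

definition P_of_Q :: "real set \<Rightarrow> (real \<Rightarrow> real) \<Rightarrow> real pmf" where
  "P_of_Q X \<omega> = (let C = (\<Sum>\<xi>\<in>X. \<omega> \<xi> / sqrt (1 - \<xi>^2)) in
     embed_pmf (\<lambda>a. if 2 * a - 1 \<in> X
        then \<omega> (2 * a - 1) / (C * sqrt (1 - (2 * a - 1)^2)) else 0))"

definition Q_nodes :: "real pmf \<Rightarrow> real set" where
  "Q_nodes P = (\<lambda>p. 2 * p - 1) ` set_pmf P"

definition Q_weight :: "real pmf \<Rightarrow> real \<Rightarrow> real" where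
  "Q_weight P = (let C' = (\<Sum>p\<in>set_pmf P. sqrt (p * (1 - p)) * pmf P p / 2) in
     (\<lambda>\<xi>. let p = (1 + \<xi>) / 2 in sqrt (p * (1 - p)) * pmf P p / C'))"

end

theory Submission
  imports Defs
begin


lemma f_bias_alt:
  assumes p: "0 < p" "p < 1" and x: "1 \<le> x" "x < l"
  shows "f_bias l x p = sqrt (p * (1 - p)) * p ^ (x - 1) * (1 - p) ^ (l - x - 1) * (real x - real l * p)"
proof -
  define a where "a = sqrt p"
  define b where "b = sqrt (1 - p)"
  have a: "a > 0" "a\<^sup>2 = p" using p by (auto simp: a_def)
  have b: "b > 0" "b\<^sup>2 = 1 - p" using p by (auto simp: b_def)
  have s1: "sigma p = b / a" unfolding sigma_def a_def b_def by (simp add: real_sqrt_divide)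
  have s2: "sigma (1 - p) = a / b" unfolding sigma_def a_def b_def by (simp add: real_sqrt_divide)
  have sq: "sqrt (p * (1 - p)) = a * b" by (simp add: a_def b_def real_sqrt_mult)
  obtain u where u: "x = Suc u" using x by (cases x) auto
  obtain v where v: "l - x = Suc v" using x by (cases "l - x") auto
  have lx: "real (l - x) = real l - real x" using x by simp
  have e1: "x - 1 = u" "l - x - 1 = v" using u v by auto
  show ?thesis
  proof -
    have L: "real l = real u + real v + 2" using u v x by linarith
    have aa: "a * a = p" and bb: "b * b = 1 - p" using a b by (auto simp: power2_eq_square)
    have core: "p * (1 - p) * (real (Suc u) * (b / a) - real (Suc v) * (a / b)) =
      a * b * (real (Suc u) - (real u + real v + 2) * p)"
    proof -
      have "p * (1 - p) * (real (Suc u) * (b / a) - real (Suc v) * (a / b)) =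
          a * b * (real (Suc u) * (b * b) - real (Suc v) * (a * a))"
      proof -
        have pp: "p * (1 - p) = (a * a) * (b * b)" using aa bb by simp
        show ?thesis unfolding pp using a b by (simp add: field_simps)
      qed
      also have "\<dots> = a * b * (real (Suc u) - (real u + real v + 2) * p)"
        unfolding aa bb by (simp add: algebra_simps)
      finally show ?thesis .
    qed
    have gen: "p ^ Suc u * (1 - p) ^ Suc v * W = (p ^ u * (1 - p) ^ v) * (p * (1 - p) * W)" for W :: real
      by (simp add: mult_ac)
    have "p ^ Suc u * (1 - p) ^ Suc v * (real (Suc u) * (b / a) - real (Suc v) * (a / b)) =
      (p ^ u * (1 - p) ^ v) * (p * (1 - p) * (real (Suc u) * (b / a) - real (Suc v) * (a / b)))"
      by (rule gen)
    also have "\<dots> = a * b * p ^ u * (1 - p) ^ v * (real (Suc u) - real l * p)"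
      unfolding core L by (simp add: mult_ac)
    finally have main: "p ^ Suc u * (1 - p) ^ Suc v * (real (Suc u) * (b / a) - real (Suc v) * (a / b)) =
      a * b * p ^ u * (1 - p) ^ v * (real (Suc u) - real l * p)" .
    have xx: "real x = real (Suc u)" using u by simp
    show ?thesis unfolding f_bias_def s1 s2 sq e1 v xx using main by (simp add: u)
  qed
qed




definition CQ :: "real set \<Rightarrow> (real \<Rightarrow> real) \<Rightarrow> real" where
  "CQ X \<omega> = (\<Sum>\<xi>\<in>X. \<omega> \<xi> / sqrt (1 - \<xi>^2))"

lemma sqrt_pos_node: "\<xi> \<in> {-1<..<1::real} \<Longrightarrow> sqrt (1 - \<xi>^2) > 0"
proof -
  assume "\<xi> \<in> {-1<..<1::real}"
  then have "\<bar>\<xi>\<bar> < 1" by auto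
  then have "\<xi>^2 < 1" by (simp add: abs_square_less_1)
  then show ?thesis by simp
qed

lemma CQ_pos:
  assumes "finite X" "X \<subseteq> {-1<..<1}" "X \<noteq> {}" "\<forall>\<xi>\<in>X. \<omega> \<xi> > 0"
  shows "CQ X \<omega> > 0"
  unfolding CQ_def
proof (rule sum_pos)
  fix \<xi> assume "\<xi> \<in> X"
  then show "0 < \<omega> \<xi> / sqrt (1 - \<xi>\<^sup>2)" using assms sqrt_pos_node[of \<xi>] by auto
qed (use assms in auto)

lemma pmf_P_of_Q:
  assumes fin: "finite X" and sub: "X \<subseteq> {-1<..<1}" and ne: "X \<noteq> {}" and pos: "\<forall>\<xi>\<in>X. \<omega> \<xi> > 0"
  shows "pmf (P_of_Q X \<omega>) a = (if 2*a-1 \<in> X then \<omega> (2*a-1) / (CQ X \<omega> * sqrt (1 - (2*a-1)^2)) else 0)"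
proof -
  define f where "f = (\<lambda>a::real. if 2 * a - 1 \<in> X
        then \<omega> (2 * a - 1) / (CQ X \<omega> * sqrt (1 - (2 * a - 1)^2)) else 0)"
  have C: "CQ X \<omega> > 0" using CQ_pos[OF assms] .
  have nn: "0 \<le> f x" for x
    unfolding f_def using C pos sqrt_pos_node[of "2*x-1"] sub
    by (auto intro!: divide_nonneg_pos less_imp_le)
  define A where "A = (\<lambda>\<xi>. (1+\<xi>)/2) ` X"
  have finA: "finite A" unfolding A_def using fin by simp
  have injA: "inj_on (\<lambda>\<xi>::real. (1+\<xi>)/2) X" by (auto simp: inj_on_def)
  have "(\<integral>\<^sup>+ x. ennreal (f x) \<partial>count_space UNIV) = (\<Sum>x\<in>A. ennreal (f x))"
  proof (rule nn_integral_count_space'[OF finA])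
    fix x assume "x \<notin> A"
    then have "2*x-1 \<notin> X" unfolding A_def by (force simp: image_iff)
    then show "ennreal (f x) = 0" by (simp add: f_def)
  qed simp
  also have "\<dots> = ennreal (sum f A)" using nn by simp
  also have "sum f A = (\<Sum>\<xi>\<in>X. f ((1+\<xi>)/2))" unfolding A_def by (rule sum.reindex[OF injA, unfolded comp_def])
  also have "\<dots> = (\<Sum>\<xi>\<in>X. \<omega> \<xi> / sqrt (1 - \<xi>^2)) / CQ X \<omega>"
  proof -
    have e: "2 * ((1 + \<xi>) / 2) - 1 = \<xi>" for \<xi> :: real by (simp add: field_simps)
    show ?thesis unfolding sum_divide_distrib f_def e by (rule sum.cong) auto
  qed
  also have "\<dots> = 1" using C unfolding CQ_def by simp
  finally have prob: "(\<integral>\<^sup>+ x. ennreal (f x) \<partial>count_space UNIV) = 1" by simp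
  show ?thesis
    unfolding P_of_Q_def Let_def CQ_def[symmetric] f_def[symmetric]
    using pmf_embed_pmf[OF nn prob] by (simp add: f_def)
qed




lemma deriv_K:
  "((\<lambda>t::real. 2 * ((1+t)/2)^Suc u * ((1-t)/2)^Suc v) has_real_derivative
     ((1+t)/2)^u * ((1-t)/2)^v * (real (Suc u) - real (u+v+2) * ((1+t)/2))) (at t)"
proof -
  have da: "((\<lambda>t::real. (1+t)/2) has_real_derivative 1/2) (at t)" by (auto intro!: derivative_eq_intros)
  have db: "((\<lambda>t::real. (1-t)/2) has_real_derivative -1/2) (at t)" by (auto intro!: derivative_eq_intros)
  have pa: "((\<lambda>t::real. ((1+t)/2)^Suc u) has_real_derivative real (Suc u) * ((1+t)/2)^u * (1/2)) (at t)"
    using DERIV_power[OF da, of "Suc u"] by simp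
  have pb: "((\<lambda>t::real. ((1-t)/2)^Suc v) has_real_derivative real (Suc v) * ((1-t)/2)^v * (-1/2)) (at t)"
    using DERIV_power[OF db, of "Suc v"] by simp
  have m: "((\<lambda>t::real. ((1+t)/2)^Suc u * ((1-t)/2)^Suc v) has_real_derivative
     (real (Suc u) * ((1+t)/2)^u * (1/2) * ((1-t)/2)^Suc v + real (Suc v) * ((1-t)/2)^v * (-1/2) * ((1+t)/2)^Suc u)) (at t)"
    by (rule DERIV_mult[OF pa pb])
  have c: "((\<lambda>t::real. 2 * (((1+t)/2)^Suc u * ((1-t)/2)^Suc v)) has_real_derivative
     2 * (real (Suc u) * ((1+t)/2)^u * (1/2) * ((1-t)/2)^Suc v + real (Suc v) * ((1-t)/2)^v * (-1/2) * ((1+t)/2)^Suc u)) (at t)"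
    by (rule DERIV_cmult[OF m])
  have eq: "2 * (real (Suc u) * ((1+t)/2)^u * (1/2) * ((1-t)/2)^Suc v + real (Suc v) * ((1-t)/2)^v * (-1/2) * ((1+t)/2)^Suc u)
     = ((1+t)/2)^u * ((1-t)/2)^v * (real (Suc u) - real (u+v+2) * ((1+t)/2))"
  proof -
    define a where "a = (1+t)/2"
    have b: "(1-t)/2 = 1 - a" unfolding a_def by (simp add: field_simps)
    show ?thesis unfolding b a_def[symmetric] by (simp add: algebra_simps)
  qed
  have f: "(\<lambda>t::real. 2 * ((1+t)/2)^Suc u * ((1-t)/2)^Suc v) = (\<lambda>t::real. 2 * (((1+t)/2)^Suc u * ((1-t)/2)^Suc v))"
    by (simp only: mult.assoc)
  show ?thesis using c unfolding eq f .
qed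

lemma integral_K:
  "integral {-1..1} (\<lambda>t::real. ((1+t)/2)^u * ((1-t)/2)^v * (real (Suc u) - real (u+v+2) * ((1+t)/2))) = 0"
proof -
  define K where "K = (\<lambda>t::real. 2 * ((1+t)/2)^Suc u * ((1-t)/2)^Suc v)"
  have "((\<lambda>t::real. ((1+t)/2)^u * ((1-t)/2)^v * (real (Suc u) - real (u+v+2) * ((1+t)/2))) has_integral
     (K 1 - K (-1))) {-1..1}"
  proof (rule fundamental_theorem_of_calculus)
    fix x :: real assume "x \<in> {-1..1}"
    have "(K has_real_derivative ((1+x)/2)^u * ((1-x)/2)^v * (real (Suc u) - real (u+v+2) * ((1+x)/2))) (at x within {-1..1})"
      unfolding K_def by (rule has_field_derivative_at_within[OF deriv_K])
    then show "(K has_vector_derivative ((1+x)/2)^u * ((1-x)/2)^v * (real (Suc u) - real (u+v+2) * ((1+x)/2))) (at x within {-1..1})"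
      by (simp add: has_real_derivative_iff_has_vector_derivative)
  qed simp
  moreover have "K 1 - K (-1) = 0" unfolding K_def by simp
  ultimately show ?thesis by (simp add: integral_unique)
qed



definition Hp :: "nat \<Rightarrow> nat \<Rightarrow> real poly" where
  "Hp u v = [:1/2,1/2:]^u * [:1/2,-1/2:]^v * [:real (Suc u) - real (u+v+2)/2, -real (u+v+2)/2:]"

lemma poly_lin_c0: "poly [:a - L/2, -L/2:] t = a - L * ((1+t)/(2::real))"
  by (simp add: field_simps)

lemma poly_Hp: "poly (Hp u v) t = ((1+t)/2)^u * ((1-t)/2)^v * (real (Suc u) - real (u+v+2) * ((1+t)/2))"
proof -
  have a: "poly [:1/2,1/2:] t = (1+t)/2" by (simp add: field_simps)
  have b: "poly [:1/2,-1/2:] t = (1-t)/2" by (simp add: field_simps)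
  show ?thesis unfolding Hp_def poly_mult poly_power a b poly_lin_c0 by (rule refl)
qed

lemma degree_lin: "degree [:a, b:] \<le> 1"
  by (simp add: degree_pCons_le)

lemma degree_Hp: "degree (Hp u v) \<le> u + v + 1"
proof -
  have "degree (Hp u v) \<le> degree ([:1/2,1/2:]^u * [:1/2,-1/2:]^v :: real poly) + degree [:real (Suc u) - real (u+v+2)/2, -real (u+v+2)/2:]"
    unfolding Hp_def by (rule degree_mult_le)
  also have "\<dots> \<le> (degree ([:1/2,1/2:]^u :: real poly) + degree ([:1/2,-1/2:]^v :: real poly)) + 1"
    by (intro add_mono degree_mult_le degree_lin)
  also have "\<dots> \<le> (degree ([:1/2,1/2:] :: real poly) * u + degree ([:1/2,-1/2:] :: real poly) * v) + 1"
    by (intro add_mono degree_power_le order_refl)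
  also have "\<dots> \<le> (1 * u + 1 * v) + 1"
    by (intro add_mono mult_le_mono order_refl degree_lin)
  finally show ?thesis by simp
qed

lemma half_id: "2 * ((1 + \<xi>) / 2) - 1 = (\<xi>::real)" by (simp add: field_simps)

lemma sqrt_half: "sqrt ((1+\<xi>)/2 * (1 - (1+\<xi>)/2)) = sqrt (1 - \<xi>^2) / (2::real)"
proof -
  have e: "(1+\<xi>)/2 * (1 - (1+\<xi>)/2) = (1 - \<xi>^2) / 4" by (simp add: field_simps power2_eq_square)
  have f: "sqrt (4::real) = 2" by (simp add: real_sqrt_eq_iff)
  show ?thesis unfolding e real_sqrt_divide f ..
qed

lemma set_pmf_P_of_Q:
  assumes fin: "finite X" and sub: "X \<subseteq> {-1<..<1}" and ne: "X \<noteq> {}" and pos: "\<forall>\<xi>\<in>X. \<omega> \<xi> > 0"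
  shows "set_pmf (P_of_Q X \<omega>) = (\<lambda>\<xi>. (1+\<xi>)/2) ` X"
proof -
  have C: "CQ X \<omega> > 0" using CQ_pos[OF assms] .
  have "pmf (P_of_Q X \<omega>) a \<noteq> 0 \<longleftrightarrow> 2*a-1 \<in> X" for a
  proof
    assume "2*a-1 \<in> X"
    then have "\<omega> (2*a-1) > 0" "sqrt (1 - (2*a-1)^2) > 0" using pos sub sqrt_pos_node by auto
    then show "pmf (P_of_Q X \<omega>) a \<noteq> 0" using C \<open>2*a-1 \<in> X\<close> by (simp add: pmf_P_of_Q[OF assms])
  qed (auto simp: pmf_P_of_Q[OF assms] split: if_splits)
  moreover have "a \<in> (\<lambda>\<xi>. (1+\<xi>)/2) ` X \<longleftrightarrow> 2*a-1 \<in> X" for a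
  proof
    assume "2*a-1 \<in> X"
    moreover have "a = (1 + (2*a-1))/2" by simp
    ultimately show "a \<in> (\<lambda>\<xi>. (1+\<xi>)/2) ` X" by blast
  next
    assume "a \<in> (\<lambda>\<xi>. (1+\<xi>)/2) ` X"
    then obtain \<xi> where "\<xi> \<in> X" "a = (1+\<xi>)/2" by blast
    then show "2*a-1 \<in> X" by (simp only: half_id)
  qed
  ultimately show ?thesis unfolding set_pmf_eq by auto
qed

lemma exp_P_of_Q:
  assumes fin: "finite X" and sub: "X \<subseteq> {-1<..<1}" and ne: "X \<noteq> {}" and pos: "\<forall>\<xi>\<in>X. \<omega> \<xi> > 0"
  shows "measure_pmf.expectation (P_of_Q X \<omega>) g = (\<Sum>\<xi>\<in>X. \<omega> \<xi> / (CQ X \<omega> * sqrt (1 - \<xi>^2)) * g ((1+\<xi>)/2))"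
proof -
  have injA: "inj_on (\<lambda>\<xi>::real. (1+\<xi>)/2) X" by (auto simp: inj_on_def)
  have "measure_pmf.expectation (P_of_Q X \<omega>) g = (\<Sum>a\<in>(\<lambda>\<xi>. (1+\<xi>)/2) ` X. g a * pmf (P_of_Q X \<omega>) a)"
    by (rule integral_measure_pmf_real) (use fin set_pmf_P_of_Q[OF assms] in auto)
  also have "\<dots> = (\<Sum>\<xi>\<in>X. g ((1+\<xi>)/2) * pmf (P_of_Q X \<omega>) ((1+\<xi>)/2))"
    by (rule sum.reindex[OF injA, unfolded comp_def])
  also have "\<dots> = (\<Sum>\<xi>\<in>X. \<omega> \<xi> / (CQ X \<omega> * sqrt (1 - \<xi>^2)) * g ((1+\<xi>)/2))"
  proof (rule sum.cong[OF refl])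
    fix \<xi> assume x: "\<xi> \<in> X"
    have "pmf (P_of_Q X \<omega>) ((1+\<xi>)/2) = \<omega> \<xi> / (CQ X \<omega> * sqrt (1 - \<xi>^2))"
      by (simp only: pmf_P_of_Q[OF assms] half_id if_P[OF x])
    then show "g ((1+\<xi>)/2) * pmf (P_of_Q X \<omega>) ((1+\<xi>)/2) = \<omega> \<xi> / (CQ X \<omega> * sqrt (1 - \<xi>^2)) * g ((1+\<xi>)/2)"
      by simp
  qed
  finally show ?thesis .
qed

lemma quad_X_ne:
  assumes q: "quad_system d X \<omega>"
  shows "X \<noteq> {}" "(\<Sum>\<xi>\<in>X. \<omega> \<xi>) = 2"
proof -
  have "integral {-1..1} (poly (1::real poly)) = (\<Sum>\<xi>\<in>X. \<omega> \<xi> * poly 1 \<xi>)"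
    using q unfolding quad_system_def by auto
  moreover have "poly (1::real poly) = (\<lambda>_. 1)" by (rule ext) simp
  ultimately show s: "(\<Sum>\<xi>\<in>X. \<omega> \<xi>) = 2" by simp
  then show "X \<noteq> {}" by auto
qed




lemma pmf_P_of_Q_node:
  assumes fin: "finite X" and sub: "X \<subseteq> {-1<..<1}" and ne: "X \<noteq> {}" and pos: "\<forall>\<xi>\<in>X. \<omega> \<xi> > 0"
    and x: "\<xi> \<in> X"
  shows "pmf (P_of_Q X \<omega>) ((1+\<xi>)/2) = \<omega> \<xi> / (CQ X \<omega> * sqrt (1 - \<xi>^2))"
  by (simp only: pmf_P_of_Q[OF fin sub ne pos] half_id if_P[OF x])

lemma exp_f_bias_zero:
  assumes q: "quad_system (c - 1) X \<omega>" and x1: "1 \<le> x" and xl: "x < l" and lc: "l \<le> c"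
  shows "measure_pmf.expectation (P_of_Q X \<omega>) (f_bias l x) = 0"
proof -
  from q have fin: "finite X" and sub: "X \<subseteq> {-1<..<1}" and pos: "\<forall>\<xi>\<in>X. \<omega> \<xi> > 0"
    unfolding quad_system_def by auto
  have ne: "X \<noteq> {}" using quad_X_ne[OF q] by auto
  note A = fin sub ne pos
  have C: "CQ X \<omega> > 0" using CQ_pos[OF A] .
  obtain u where u: "x = Suc u" using x1 by (cases x) auto
  obtain v where v: "l - x = Suc v" using xl by (cases "l - x") auto
  have lreal: "real l = real (u+v+2)" using u v xl by simp
  have e1: "x - 1 = u" "l - x - 1 = v" using u v by auto
  have "measure_pmf.expectation (P_of_Q X \<omega>) (f_bias l x) =
      (\<Sum>\<xi>\<in>X. \<omega> \<xi> / (CQ X \<omega> * sqrt (1 - \<xi>^2)) * f_bias l x ((1+\<xi>)/2))"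
    by (rule exp_P_of_Q[OF A])
  also have "\<dots> = (\<Sum>\<xi>\<in>X. \<omega> \<xi> * poly (Hp u v) \<xi> / (2 * CQ X \<omega>))"
  proof (rule sum.cong[OF refl])
    fix \<xi> assume xi: "\<xi> \<in> X"
    then have r: "-1 < \<xi>" "\<xi> < 1" using sub by auto
    have sp: "sqrt (1 - \<xi>^2) > 0" using sqrt_pos_node[of \<xi>] r by auto
    have om: "1 - (1+\<xi>)/2 = (1-\<xi>)/2" by (simp add: field_simps)
    have "f_bias l x ((1+\<xi>)/2) = sqrt ((1+\<xi>)/2 * (1 - (1+\<xi>)/2)) * ((1+\<xi>)/2) ^ (x - 1) *
        (1 - (1+\<xi>)/2) ^ (l - x - 1) * (real x - real l * ((1+\<xi>)/2))"
      by (rule f_bias_alt) (use r x1 xl in auto)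
    also have "\<dots> = sqrt (1 - \<xi>^2) / 2 * poly (Hp u v) \<xi>"
    proof -
      have xr: "real x = real (Suc u)" using u by simp
      show ?thesis unfolding sqrt_half unfolding e1 unfolding om poly_Hp lreal xr by simp
    qed
    finally have "f_bias l x ((1+\<xi>)/2) = sqrt (1 - \<xi>^2) / 2 * poly (Hp u v) \<xi>" .
    then show "\<omega> \<xi> / (CQ X \<omega> * sqrt (1 - \<xi>^2)) * f_bias l x ((1+\<xi>)/2) = \<omega> \<xi> * poly (Hp u v) \<xi> / (2 * CQ X \<omega>)"
      using sp C by (simp add: field_simps)
  qed
  also have "\<dots> = (\<Sum>\<xi>\<in>X. \<omega> \<xi> * poly (Hp u v) \<xi>) / (2 * CQ X \<omega>)"
    by (simp add: sum_divide_distrib)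
  also have "(\<Sum>\<xi>\<in>X. \<omega> \<xi> * poly (Hp u v) \<xi>) = integral {-1..1} (poly (Hp u v))"
  proof -
    have "degree (Hp u v) \<le> c - 1" using degree_Hp[of u v] u v xl lc by linarith
    then show ?thesis using q unfolding quad_system_def by auto
  qed
  also have "poly (Hp u v) = (\<lambda>t::real. ((1+t)/2)^u * ((1-t)/2)^v * (real (Suc u) - real (u+v+2) * ((1+t)/2)))"
    by (rule ext) (rule poly_Hp)
  also have "integral {-1..1} \<dots> = 0" by (rule integral_K)
  finally show ?thesis by simp
qed

lemma forward:
  assumes q: "quad_system (c - 1) X \<omega>" and s: "symmetric_qs X \<omega>"
  shows "finite_bias_dist (P_of_Q X \<omega>) \<and> c_indist c (P_of_Q X \<omega>) \<and>
            Q_nodes (P_of_Q X \<omega>) = X \<and> (\<forall>\<xi>\<in>X. Q_weight (P_of_Q X \<omega>) \<xi> = \<omega> \<xi>)"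
proof -
  from q have fin: "finite X" and sub: "X \<subseteq> {-1<..<1}" and pos: "\<forall>\<xi>\<in>X. \<omega> \<xi> > 0"
    unfolding quad_system_def by auto
  have ne: "X \<noteq> {}" and sw: "(\<Sum>\<xi>\<in>X. \<omega> \<xi>) = 2" using quad_X_ne[OF q] by auto
  note A = fin sub ne pos
  have C: "CQ X \<omega> > 0" using CQ_pos[OF A] .
  let ?P = "P_of_Q X \<omega>"
  have SP: "set_pmf ?P = (\<lambda>\<xi>. (1+\<xi>)/2) ` X" by (rule set_pmf_P_of_Q[OF A])
  have inj: "inj_on (\<lambda>\<xi>::real. (1+\<xi>)/2) X" by (auto simp: inj_on_def)
  have neg: "-y \<in> X" if "y \<in> X" for y
  proof -
    have "-y \<in> uminus ` X" using that by blast
    then show ?thesis using s unfolding symmetric_qs_def by simp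
  qed
  have negiff: "-y \<in> X \<longleftrightarrow> y \<in> X" for y using neg[of y] neg[of "-y"] by auto
  have fb: "finite_bias_dist ?P"
    unfolding finite_bias_dist_def
  proof (intro conjI allI)
    show "finite (set_pmf ?P)" using SP fin by simp
    show "set_pmf ?P \<subseteq> {0<..<1}" using SP sub by force
    fix a :: real
    have m: "2*(1-a)-1 = 1 - 2*a" by simp
    have sq: "(1 - 2*a)^2 = (2*a-1)^2" by (simp add: power2_eq_square algebra_simps)
    have ni: "1 - 2*a \<in> X \<longleftrightarrow> 2*a-1 \<in> X" using negiff[of "2*a-1"] by simp
    show "pmf ?P a = pmf ?P (1-a)"
    proof (cases "2*a-1 \<in> X")
      case True
      then have "\<omega> (-(2*a-1)) = \<omega> (2*a-1)" using s unfolding symmetric_qs_def by blast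
      then have "\<omega> (1 - 2*a) = \<omega> (2*a-1)" by simp
      then show ?thesis unfolding pmf_P_of_Q[OF A] m sq using True ni by simp
    next
      case False
      then show ?thesis unfolding pmf_P_of_Q[OF A] m using ni by simp
    qed
  qed
  have nodes: "Q_nodes ?P = X"
    unfolding Q_nodes_def SP image_image half_id by simp
  have C'eq: "(\<Sum>p\<in>set_pmf ?P. sqrt (p * (1 - p)) * pmf ?P p / 2) = 1 / (2 * CQ X \<omega>)"
  proof -
    have "(\<Sum>p\<in>set_pmf ?P. sqrt (p * (1 - p)) * pmf ?P p / 2) =
        (\<Sum>\<eta>\<in>X. sqrt ((1+\<eta>)/2 * (1 - (1+\<eta>)/2)) * pmf ?P ((1+\<eta>)/2) / 2)"
      unfolding SP by (rule sum.reindex[OF inj, unfolded comp_def])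
    also have "\<dots> = (\<Sum>\<eta>\<in>X. \<omega> \<eta> / (4 * CQ X \<omega>))"
    proof (rule sum.cong[OF refl])
      fix \<eta> assume e: "\<eta> \<in> X"
      have sp: "sqrt (1 - \<eta>^2) > 0" using sqrt_pos_node[of \<eta>] e sub by auto
      show "sqrt ((1+\<eta>)/2 * (1 - (1+\<eta>)/2)) * pmf ?P ((1+\<eta>)/2) / 2 = \<omega> \<eta> / (4 * CQ X \<omega>)"
        unfolding sqrt_half pmf_P_of_Q_node[OF A e] using sp C by (simp add: field_simps)
    qed
    also have "\<dots> = 1 / (2 * CQ X \<omega>)" unfolding sum_divide_distrib[symmetric] sw using C by simp
    finally show ?thesis .
  qed
  have weight: "\<forall>\<xi>\<in>X. Q_weight ?P \<xi> = \<omega> \<xi>"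
  proof
    fix \<xi> assume e: "\<xi> \<in> X"
    have sp: "sqrt (1 - \<xi>^2) > 0" using sqrt_pos_node[of \<xi>] e sub by auto
    show "Q_weight ?P \<xi> = \<omega> \<xi>"
      unfolding Q_weight_def Let_def C'eq sqrt_half pmf_P_of_Q_node[OF A e] using sp C by (simp add: field_simps)
  qed
  have ci: "c_indist c ?P"
    unfolding c_indist_def
  proof (intro allI impI)
    fix l assume l: "2 \<le> l \<and> l \<le> c"
    show "(\<Sum>x = 1..l - 1. real (l choose x) * R_bias ?P l x) = 0"
    proof (rule sum.neutral, rule ballI)
      fix x assume "x \<in> {1..l-1}"
      then have "1 \<le> x" "x < l" using l by auto
      then have "measure_pmf.expectation ?P (f_bias l x) = 0" using exp_f_bias_zero[OF q] l by blast
      then show "real (l choose x) * R_bias ?P l x = 0" unfolding R_bias_def by simp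
    qed
  qed
  show ?thesis using fb ci nodes weight by blast
qed




definition mom :: "real pmf \<Rightarrow> nat \<Rightarrow> real" where
  "mom P k = (\<Sum>p\<in>set_pmf P. pmf P p * (sqrt (p * (1 - p)) * p ^ k))"

lemma exp_fin:
  assumes "finite_bias_dist P"
  shows "measure_pmf.expectation P g = (\<Sum>p\<in>set_pmf P. pmf P p * g p)"
proof -
  have "finite (set_pmf P)" using assms unfolding finite_bias_dist_def by auto
  then have "measure_pmf.expectation P g = (\<Sum>p\<in>set_pmf P. g p * pmf P p)"
    by (rule integral_measure_pmf_real) auto
  then show ?thesis by (simp add: mult.commute)
qed

lemma flip_sum:
  assumes fb: "finite_bias_dist P"
  shows "(\<Sum>p\<in>set_pmf P. pmf P p * g (1 - p)) = (\<Sum>p\<in>set_pmf P. pmf P p * g p)"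
proof -
  have sym: "pmf P a = pmf P (1 - a)" for a using fb unfolding finite_bias_dist_def by auto
  have img: "(\<lambda>p. 1 - p) ` set_pmf P = set_pmf P"
  proof
    show "(\<lambda>p. 1 - p) ` set_pmf P \<subseteq> set_pmf P"
      using sym by (auto simp: set_pmf_eq)
    show "set_pmf P \<subseteq> (\<lambda>p. 1 - p) ` set_pmf P"
    proof
      fix q assume "q \<in> set_pmf P"
      then have "1 - q \<in> set_pmf P" using sym by (auto simp: set_pmf_eq)
      then show "q \<in> (\<lambda>p. 1 - p) ` set_pmf P" by (rule rev_image_eqI) simp
    qed
  qed
  have inj: "inj_on (\<lambda>p::real. 1 - p) (set_pmf P)" by (auto simp: inj_on_def)
  have "(\<Sum>p\<in>set_pmf P. pmf P p * g p) = (\<Sum>p\<in>(\<lambda>p. 1 - p) ` set_pmf P. pmf P p * g p)"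
    unfolding img ..
  also have "\<dots> = (\<Sum>p\<in>set_pmf P. pmf P (1 - p) * g (1 - p))"
    by (rule sum.reindex[OF inj, unfolded comp_def])
  also have "\<dots> = (\<Sum>p\<in>set_pmf P. pmf P p * g (1 - p))"
    using sym by simp
  finally show ?thesis by simp
qed

lemma f_bias_flip:
  assumes "x \<le> l"
  shows "f_bias l (l - x) (1 - p) = - f_bias l x p"
proof -
  have e: "l - (l - x) = x" using assms by simp
  show ?thesis unfolding f_bias_def e by (simp add: algebra_simps)
qed

lemma exp_zero_top:
  assumes fb: "finite_bias_dist P" and ci: "c_indist c P" and l: "2 \<le> l" "l \<le> c"
  shows "measure_pmf.expectation P (f_bias l (l - 1)) = 0"
proof -
  have le0: "measure_pmf.expectation P (f_bias l x) \<le> 0" if x: "x \<in> {1..l-1}" for x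
  proof -
    have s0: "(\<Sum>x = 1..l - 1. real (l choose x) * R_bias P l x) = 0" using ci l unfolding c_indist_def by auto
    have nn: "\<forall>x\<in>{1..l-1}. 0 \<le> real (l choose x) * R_bias P l x" unfolding R_bias_def by auto
    have "real (l choose x) * R_bias P l x = 0" using sum_nonneg_eq_0_iff[of "{1..l-1}", OF _ nn[rule_format]] s0 x by auto
    moreover have "x \<le> l" using x l by auto
    then have "real (l choose x) > 0" by (simp add: zero_less_binomial)
    ultimately have "R_bias P l x = 0" by simp
    then show ?thesis unfolding R_bias_def by (simp add: max_def split: if_splits)
  qed
  have a: "measure_pmf.expectation P (f_bias l (l - 1)) \<le> 0" using le0[of "l-1"] l by auto
  have b: "measure_pmf.expectation P (f_bias l 1) \<le> 0" using le0[of 1] l by auto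
  have "measure_pmf.expectation P (f_bias l (l - 1)) = (\<Sum>p\<in>set_pmf P. pmf P p * f_bias l (l - 1) p)"
    by (rule exp_fin[OF fb])
  also have "\<dots> = (\<Sum>p\<in>set_pmf P. pmf P p * f_bias l (l - 1) (1 - p))"
    by (rule flip_sum[OF fb, symmetric])
  also have "\<dots> = (\<Sum>p\<in>set_pmf P. pmf P p * (- f_bias l 1 p))"
    using f_bias_flip[of 1 l] l by simp
  also have "\<dots> = - measure_pmf.expectation P (f_bias l 1)"
    unfolding exp_fin[OF fb] by (simp add: sum_negf)
  finally show ?thesis using a b by simp
qed

lemma mom_step:
  assumes fb: "finite_bias_dist P" and ci: "c_indist c P" and k: "k + 2 \<le> c"
  shows "real (k+1) * mom P k = real (k+2) * mom P (k+1)"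
proof -
  have sub: "set_pmf P \<subseteq> {0<..<1}" using fb unfolding finite_bias_dist_def by auto
  have "0 = measure_pmf.expectation P (f_bias (k+2) (k+2-1))"
    using exp_zero_top[OF fb ci, of "k+2"] k by simp
  also have "\<dots> = (\<Sum>p\<in>set_pmf P. pmf P p * f_bias (k+2) (k+1) p)"
    unfolding exp_fin[OF fb] by simp
  also have "\<dots> = (\<Sum>p\<in>set_pmf P. real (k+1) * (pmf P p * (sqrt (p * (1 - p)) * p ^ k)) -
                      real (k+2) * (pmf P p * (sqrt (p * (1 - p)) * p ^ (k+1))))"
  proof (rule sum.cong[OF refl])
    fix p assume "p \<in> set_pmf P"
    then have p: "0 < p" "p < 1" using sub by auto
    have "f_bias (k+2) (k+1) p = sqrt (p * (1 - p)) * p ^ (k + 1 - 1) * (1 - p) ^ (k + 2 - (k + 1) - 1) *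
       (real (k + 1) - real (k + 2) * p)"
      by (rule f_bias_alt) (use p in auto)
    then have fb': "f_bias (k+2) (k+1) p = sqrt (p * (1 - p)) * p ^ k * (real (k + 1) - real (k + 2) * p)"
      by simp
    show "pmf P p * f_bias (k+2) (k+1) p = real (k+1) * (pmf P p * (sqrt (p * (1 - p)) * p ^ k)) -
                      real (k+2) * (pmf P p * (sqrt (p * (1 - p)) * p ^ (k+1)))"
      unfolding fb' by (simp add: algebra_simps)
  qed
  also have "\<dots> = real (k+1) * mom P k - real (k+2) * mom P (k+1)"
    unfolding mom_def sum_subtractf sum_distrib_left ..
  finally show ?thesis by simp
qed

lemma mom_closed:
  assumes fb: "finite_bias_dist P" and ci: "c_indist c P"
  shows "k + 1 \<le> c \<Longrightarrow> mom P k = mom P 0 / real (k+1)"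
proof (induction k)
  case 0
  then show ?case by simp
next
  case (Suc k)
  then have "real (k+1) * mom P k = real (k+2) * mom P (k+1)" using mom_step[OF fb ci, of k] by simp
  moreover have "mom P k = mom P 0 / real (k+1)" using Suc by simp
  ultimately have "real (k+2) * mom P (k+1) = real (k+1) * (mom P 0 / real (k+1))" by simp
  also have "\<dots> = mom P 0" by simp
  finally have "mom P (k+1) = mom P 0 / real (k+2)" by (simp add: field_simps)
  then show ?case by simp
qed

lemma integral_monomial:
  "((\<lambda>t::real. ((1+t)/2)^k) has_integral 2 / real (k+1)) {-1..1}"
proof -
  define K where "K = (\<lambda>t::real. (2 / real (k+1)) * ((1+t)/2)^Suc k)"
  have da: "((\<lambda>t::real. (1+t)/2) has_real_derivative 1/2) (at t)" for t by (auto intro!: derivative_eq_intros)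
  have dK: "(K has_real_derivative ((1+t)/2)^k) (at t)" for t
  proof -
    have "((\<lambda>t::real. ((1+t)/2)^Suc k) has_real_derivative real (Suc k) * ((1+t)/2)^k * (1/2)) (at t)"
      using DERIV_power[OF da, of "Suc k"] by simp
    from DERIV_cmult[OF this, of "2 / real (k+1)"]
    have "(K has_real_derivative (2 / real (k+1)) * (real (Suc k) * ((1+t)/2)^k * (1/2))) (at t)"
      unfolding K_def .
    moreover have "(2 / real (k+1)) * (real (Suc k) * ((1+t)/2)^k * (1/2)) = ((1+t)/2)^k"
      by simp
    ultimately show ?thesis by simp
  qed
  have "((\<lambda>t::real. ((1+t)/2)^k) has_integral (K 1 - K (-1))) {-1..1}"
  proof (rule fundamental_theorem_of_calculus)
    fix x :: real assume "x \<in> {-1..1}"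
    show "(K has_vector_derivative ((1+x)/2)^k) (at x within {-1..1})"
      using has_field_derivative_at_within[OF dK[of x]] by (simp add: has_real_derivative_iff_has_vector_derivative)
  qed simp
  moreover have "K 1 - K (-1) = 2 / real (k+1)" unfolding K_def by simp
  ultimately show ?thesis by simp
qed




lemma sqrt_node: "sqrt (1 - (2*p-1)^2) = 2 * sqrt (p * (1 - (p::real)))"
proof -
  have e: "1 - (2*p-1)^2 = 4 * (p * (1 - p))" by (simp add: power2_eq_square algebra_simps)
  have f: "sqrt (4::real) = 2" by (simp add: real_sqrt_eq_iff)
  show ?thesis unfolding e real_sqrt_mult f ..
qed

lemma backward:
  assumes fb: "finite_bias_dist P" and ci: "c_indist c P" and c1: "c \<ge> 1"
  shows "quad_system (c - 1) (Q_nodes P) (Q_weight P) \<and> symmetric_qs (Q_nodes P) (Q_weight P) \<and>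
            P_of_Q (Q_nodes P) (Q_weight P) = P"
proof -
  define S where "S = set_pmf P"
  have fin: "finite S" and sub: "S \<subseteq> {0<..<1}" and sym: "\<And>a. pmf P a = pmf P (1 - a)"
    using fb unfolding finite_bias_dist_def S_def by auto
  have spos: "sqrt (p * (1 - p)) > 0" if "p \<in> S" for p
    using that sub by (auto intro!: mult_pos_pos)
  have ppos: "pmf P p > 0" if "p \<in> S" for p
    using that unfolding S_def by (simp add: pmf_positive)
  have Sne: "S \<noteq> {}" unfolding S_def by (rule set_pmf_not_empty)
  define m0 where "m0 = mom P 0"
  have m0pos: "m0 > 0" unfolding m0_def mom_def S_def[symmetric]
    by (rule sum_pos[OF fin Sne]) (use spos ppos in auto)
  have C'eq: "(\<Sum>p\<in>set_pmf P. sqrt (p * (1 - p)) * pmf P p / 2) = m0 / 2"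
    unfolding m0_def mom_def sum_divide_distrib by (simp add: mult_ac)
  have QW: "Q_weight P \<xi> = sqrt ((1+\<xi>)/2 * (1 - (1+\<xi>)/2)) * pmf P ((1+\<xi>)/2) / (m0 / 2)" for \<xi>
    unfolding Q_weight_def Let_def C'eq ..
  have QW2: "Q_weight P (2*p-1) = sqrt (p * (1 - p)) * pmf P p / (m0 / 2)" for p
    unfolding QW by simp
  have inj2: "inj_on (\<lambda>p::real. 2*p-1) S" by (auto simp: inj_on_def)
  have nodes: "Q_nodes P = (\<lambda>p. 2*p-1) ` S" unfolding Q_nodes_def S_def ..
  have finN: "finite (Q_nodes P)" unfolding nodes using fin by simp
  have subN: "Q_nodes P \<subseteq> {-1<..<1}" unfolding nodes using sub by force
  have neN: "Q_nodes P \<noteq> {}" unfolding nodes using Sne by simp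
  have posN: "\<forall>\<xi>\<in>Q_nodes P. Q_weight P \<xi> > 0"
    unfolding nodes using spos ppos m0pos by (auto simp: QW2)
  have quad: "quad_system (c - 1) (Q_nodes P) (Q_weight P)"
    unfolding quad_system_def
  proof (intro conjI allI impI)
    show "finite (Q_nodes P)" "Q_nodes P \<subseteq> {-1<..<1}" "\<forall>\<xi>\<in>Q_nodes P. 0 < Q_weight P \<xi>"
      using finN subN posN by auto
    fix F :: "real poly" assume dF: "degree F \<le> c - 1"
    define G where "G = pcompose F [:-1, 2:]"
    have hG: "poly G p = poly F (2*p-1)" for p unfolding G_def poly_pcompose by (simp add: mult.commute)
    have dG: "degree G \<le> c - 1" unfolding G_def using dF by (simp add: degree_pcompose)
    define n where "n = degree G"
    have exp: "poly G p = (\<Sum>k\<le>n. coeff G k * p ^ k)" for p unfolding n_def by (rule poly_altdef)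
    have "(\<Sum>\<xi>\<in>Q_nodes P. Q_weight P \<xi> * poly F \<xi>) = (\<Sum>p\<in>S. Q_weight P (2*p-1) * poly F (2*p-1))"
      unfolding nodes by (rule sum.reindex[OF inj2, unfolded comp_def])
    also have "\<dots> = (\<Sum>p\<in>S. (2 / m0) * (\<Sum>k\<le>n. coeff G k * (pmf P p * (sqrt (p * (1 - p)) * p ^ k))))"
    proof (rule sum.cong[OF refl])
      fix p assume "p \<in> S"
      have "(\<Sum>k\<le>n. coeff G k * (pmf P p * (sqrt (p * (1 - p)) * p ^ k))) = (pmf P p * sqrt (p * (1 - p))) * poly G p"
        unfolding exp sum_distrib_left by (rule sum.cong) (auto simp: mult_ac)
      then show "Q_weight P (2*p-1) * poly F (2*p-1) = (2 / m0) * (\<Sum>k\<le>n. coeff G k * (pmf P p * (sqrt (p * (1 - p)) * p ^ k)))"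
        unfolding QW2 hG[symmetric] using m0pos by simp
    qed
    also have "\<dots> = (2 / m0) * (\<Sum>k\<le>n. coeff G k * mom P k)"
      unfolding mom_def S_def[symmetric] sum_distrib_left[symmetric]
      by (subst sum.swap) (simp add: sum_distrib_left)
    also have "\<dots> = (2 / m0) * (\<Sum>k\<le>n. coeff G k * (m0 / real (k+1)))"
    proof -
      have "mom P k = m0 / real (k+1)" if "k \<in> {..n}" for k
        unfolding m0_def by (rule mom_closed[OF fb ci]) (use that dG c1 n_def in auto)
      then show ?thesis by simp
    qed
    also have "\<dots> = (\<Sum>k\<le>n. coeff G k * (2 / real (k+1)))"
      unfolding sum_distrib_left using m0pos by (intro sum.cong) (auto simp: field_simps)
    finally have R: "(\<Sum>\<xi>\<in>Q_nodes P. Q_weight P \<xi> * poly F \<xi>) = (\<Sum>k\<le>n. coeff G k * (2 / real (k+1)))" .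
    have pF: "poly F = (\<lambda>t. \<Sum>k\<le>n. coeff G k * ((1+t)/2) ^ k)"
    proof
      fix t :: real
      have "poly F t = poly G ((1+t)/2)" unfolding hG half_id ..
      then show "poly F t = (\<Sum>k\<le>n. coeff G k * ((1+t)/2) ^ k)" unfolding exp .
    qed
    have "((\<lambda>t. \<Sum>k\<le>n. coeff G k * ((1+t)/2) ^ k) has_integral (\<Sum>k\<le>n. coeff G k * (2 / real (k+1)))) {-1..1}"
      by (intro has_integral_sum has_integral_mult_right integral_monomial) auto
    then have "integral {-1..1} (poly F) = (\<Sum>k\<le>n. coeff G k * (2 / real (k+1)))"
      unfolding pF by (rule integral_unique)
    then show "integral {-1..1} (poly F) = (\<Sum>\<xi>\<in>Q_nodes P. Q_weight P \<xi> * poly F \<xi>)"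
      using R by simp
  qed
  have inS: "1 - p \<in> S" if "p \<in> S" for p
    using that sym[of p] unfolding S_def by (auto simp: set_pmf_eq)
  have symq: "symmetric_qs (Q_nodes P) (Q_weight P)"
    unfolding symmetric_qs_def
  proof (intro conjI ballI)
    show "uminus ` Q_nodes P = Q_nodes P"
    proof
      show "uminus ` Q_nodes P \<subseteq> Q_nodes P"
      proof
        fix y assume "y \<in> uminus ` Q_nodes P"
        then obtain p where p: "p \<in> S" "y = -(2*p-1)" unfolding nodes by auto
        then have "y = 2*(1-p)-1" by simp
        then show "y \<in> Q_nodes P" unfolding nodes using inS[OF p(1)] by blast
      qed
      show "Q_nodes P \<subseteq> uminus ` Q_nodes P"
      proof
        fix y assume "y \<in> Q_nodes P"
        then obtain p where p: "p \<in> S" "y = 2*p-1" unfolding nodes by auto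
        then have "y = -(2*(1-p)-1)" by simp
        moreover have "2*(1-p)-1 \<in> Q_nodes P" unfolding nodes using inS[OF p(1)] by blast
        ultimately show "y \<in> uminus ` Q_nodes P" by blast
      qed
    qed
  next
    fix \<xi> assume "\<xi> \<in> Q_nodes P"
    define q where "q = (1+\<xi>)/2"
    have e: "(1 + - \<xi>)/2 = 1 - q" unfolding q_def by (simp add: field_simps)
    have e2: "1 - (1 - q) = q" by simp
    show "Q_weight P (- \<xi>) = Q_weight P \<xi>"
      unfolding QW e e2 q_def[symmetric] using sym[of q] by (simp add: mult.commute)
  qed
  have CQv: "CQ (Q_nodes P) (Q_weight P) = 1 / m0"
  proof -
    have "CQ (Q_nodes P) (Q_weight P) = (\<Sum>p\<in>S. Q_weight P (2*p-1) / sqrt (1 - (2*p-1)^2))"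
      unfolding CQ_def nodes by (rule sum.reindex[OF inj2, unfolded comp_def])
    also have "\<dots> = (\<Sum>p\<in>S. pmf P p / m0)"
    proof (rule sum.cong[OF refl])
      fix p assume "p \<in> S"
      then have sp: "sqrt (p * (1 - p)) > 0" by (rule spos)
      have "p \<noteq> 0" "p \<noteq> 1" using \<open>p \<in> S\<close> sub by auto
      then show "Q_weight P (2*p-1) / sqrt (1 - (2*p-1)^2) = pmf P p / m0"
        unfolding QW2 sqrt_node using m0pos sp by (simp add: field_simps del: real_sqrt_gt_0_iff)
    qed
    also have "\<dots> = 1 / m0"
      unfolding sum_divide_distrib[symmetric] using sum_pmf_eq_1[OF fin] S_def by simp
    finally show ?thesis .
  qed
  have PQ: "P_of_Q (Q_nodes P) (Q_weight P) = P"
  proof (rule pmf_eqI)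
    fix a
    show "pmf (P_of_Q (Q_nodes P) (Q_weight P)) a = pmf P a"
    proof (cases "a \<in> S")
      case True
      then have "2*a-1 \<in> Q_nodes P" unfolding nodes by blast
      moreover have "sqrt (a * (1 - a)) > 0" using True by (rule spos)
      moreover have "a \<noteq> 0" "a \<noteq> 1" using True sub by auto
      ultimately show ?thesis
        unfolding pmf_P_of_Q[OF finN subN neN posN] CQv QW2 sqrt_node using m0pos
        by (simp add: field_simps del: real_sqrt_gt_0_iff)
    next
      case False
      have "2*a-1 \<notin> Q_nodes P"
      proof
        assume "2*a-1 \<in> Q_nodes P"
        then obtain p where "p \<in> S" "2*a-1 = 2*p-1" unfolding nodes by auto
        then show False using False by simp
      qed
      moreover have "pmf P a = 0" using False unfolding S_def by (simp add: set_pmf_eq)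
      ultimately show ?thesis unfolding pmf_P_of_Q[OF finN subN neN posN] by simp
    qed
  qed
  show ?thesis using quad symq PQ by blast
qed



theorem theorem1:
  fixes c :: nat
  assumes "c \<ge> 1"
  shows "(\<forall>X \<omega>. quad_system (c - 1) X \<omega> \<and> symmetric_qs X \<omega> \<longrightarrow>
            finite_bias_dist (P_of_Q X \<omega>) \<and> c_indist c (P_of_Q X \<omega>) \<and>
            Q_nodes (P_of_Q X \<omega>) = X \<and> (\<forall>\<xi>\<in>X. Q_weight (P_of_Q X \<omega>) \<xi> = \<omega> \<xi>))
       \<and> (\<forall>P. finite_bias_dist P \<and> c_indist c P \<longrightarrow>
            quad_system (c - 1) (Q_nodes P) (Q_weight P) \<and> symmetric_qs (Q_nodes P) (Q_weight P) \<and>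
            P_of_Q (Q_nodes P) (Q_weight P) = P)"
  using forward backward[OF _ _ assms] by blast

end
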